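(* Let $\delta\in[1/3,1]$, $\alpha>0$ with $\alpha\delta<1$, and $\eta_0^{2}=\frac{1+\alpha^{2}}{1+\delta^{2}}$. Let $0\le B_0\le\sqrt{1-\eta_0^2\delta^2}$ and define $\widetilde{A_\ast}=\sqrt{1-(1+\delta^2)B_0^2}$ and $\Delta'=\varepsilon^{4}B_0^{4}(1+\delta^{2})^{4}-2\widetilde{A_\ast}^{2}$. If $\alpha\ge\frac{10}{3}\varepsilon^{2}$ and $\varepsilon>0$ is small enough, then $-\Delta'\ge\widetilde{A_\ast}^{2}$.
   Context: Note $1-\eta_0^2\delta^2=\frac{1-\alpha^2\delta^2}{1+\delta^2}$, so $\widetilde{A_\ast}\ge\alpha\delta$ on the given range of $B_0$. *)

theory Defs
  imports Complex_Main
begin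

end

theory Submission
  imports Defs
begin

lemma key:
  fixes e d a B :: real
  assumes "0 < e" "1/3 \<le> d" "d \<le> 1" "0 < a" "a * d < 1" "0 \<le> B"
    "B \<le> sqrt (1 - ((1 + a\<^sup>2) / (1 + d\<^sup>2)) * d\<^sup>2)" "a \<ge> 10/3 * e\<^sup>2"
  shows "e^4 * B^4 * (1 + d\<^sup>2)^4 \<le> 1 - (1 + d\<^sup>2) * B\<^sup>2"
proof -
  define t where "t = 1 - ((1 + a\<^sup>2) / (1 + d\<^sup>2)) * d\<^sup>2"
  have Bt: "B \<le> sqrt t" using assms(7) t_def by simp
  have t0: "t \<ge> 0"
  proof (rule ccontr)
    assume "\<not> t \<ge> 0" hence "sqrt t < 0" by simp
    thus False using Bt assms(6) by linarith
  qed
  have "B\<^sup>2 \<le> (sqrt t)\<^sup>2" using Bt assms(6) by (simp add: power_mono)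
  hence Bt2: "B\<^sup>2 \<le> t" using t0 by simp
  have pd: "1 + d\<^sup>2 > 0" by (simp add: add_pos_nonneg)
  define x where "x = (1 + d\<^sup>2) * B\<^sup>2"
  have "(1+d\<^sup>2) * t = 1 - a\<^sup>2 * d\<^sup>2" unfolding t_def using pd by (simp add: field_simps)
  hence tt: "(1+d\<^sup>2) * t = 1 - (a*d)\<^sup>2" by (simp add: power_mult_distrib)
  have "(1+d\<^sup>2) * B\<^sup>2 \<le> (1+d\<^sup>2) * t" using Bt2 pd by (intro mult_left_mono) auto
  hence x1: "x \<le> 1 - (a*d)\<^sup>2" unfolding x_def using tt by linarith
  have x0: "x \<ge> 0" unfolding x_def using pd by simp
  have "(3*d - 1) * (d - 3) \<le> 0" using assms(2,3) by (intro mult_nonneg_nonpos) auto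
  hence q: "3*(1 + d\<^sup>2) \<le> 10 * d" by (simp add: algebra_simps power2_eq_square)
  have "e\<^sup>2 * (3*(1 + d\<^sup>2)) \<le> e\<^sup>2 * (10*d)" using q by (simp add: mult_left_mono)
  also have "\<dots> = (10/3*e\<^sup>2) * d * 3" by simp
  also have "\<dots> \<le> a * d * 3" using assms(2,8) by (intro mult_right_mono) auto
  finally have f: "e\<^sup>2 * (3*(1 + d\<^sup>2)) \<le> a * d * 3" .
  have "e\<^sup>2 * (3*(1 + d\<^sup>2)) = 3*(e\<^sup>2 * (1 + d\<^sup>2))" by (simp add: ac_simps)
  hence "3*(e\<^sup>2 * (1 + d\<^sup>2)) \<le> 3*(a * d)" using f by linarith
  hence c: "e\<^sup>2 * (1 + d\<^sup>2) \<le> a * d" by simp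
  have c0: "0 \<le> e\<^sup>2 * (1 + d\<^sup>2)" using pd by simp
  have c2: "(e\<^sup>2 * (1 + d\<^sup>2))\<^sup>2 \<le> (a*d)\<^sup>2" using c c0 by (rule power_mono)
  have "(a*d)\<^sup>2 \<ge> 0" by simp
  hence "x \<le> 1" using x1 by linarith
  hence xx: "x\<^sup>2 \<le> 1" using x0 by (simp add: power_le_one)
  have "e^4 * B^4 * (1 + d\<^sup>2)^4 = (e\<^sup>2 * (1 + d\<^sup>2))\<^sup>2 * x\<^sup>2"
    unfolding x_def by (simp add: algebra_simps power2_eq_square power4_eq_xxxx)
  also have "\<dots> \<le> (a*d)\<^sup>2 * 1" using c2 xx by (intro mult_mono) auto
  also have "\<dots> \<le> 1 - x" using x1 by simp
  finally show ?thesis unfolding x_def .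
qed

theorem lemma2:
  shows "\<exists>\<epsilon>0>0. \<forall>(\<epsilon>::real) (\<delta>::real) (\<alpha>::real) (B0::real).
    0 < \<epsilon> \<and> \<epsilon> < \<epsilon>0 \<and>
    1/3 \<le> \<delta> \<and> \<delta> \<le> 1 \<and> 0 < \<alpha> \<and> \<alpha> * \<delta> < 1 \<and>
    0 \<le> B0 \<and> B0 \<le> sqrt (1 - ((1 + \<alpha>\<^sup>2) / (1 + \<delta>\<^sup>2)) * \<delta>\<^sup>2) \<and>
    \<alpha> \<ge> 10/3 * \<epsilon>\<^sup>2 \<longrightarrow>
    (let A = sqrt (1 - (1 + \<delta>\<^sup>2) * B0\<^sup>2);
         \<Delta>' = \<epsilon>^4 * B0^4 * (1 + \<delta>\<^sup>2)^4 - 2 * A\<^sup>2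
     in - \<Delta>' \<ge> A\<^sup>2)"
proof (intro exI[of _ 1] conjI allI impI)
  fix e d a B :: real
  assume h: "0 < e \<and> e < 1 \<and> 1/3 \<le> d \<and> d \<le> 1 \<and> 0 < a \<and> a * d < 1 \<and>
    0 \<le> B \<and> B \<le> sqrt (1 - ((1 + a\<^sup>2) / (1 + d\<^sup>2)) * d\<^sup>2) \<and> a \<ge> 10/3 * e\<^sup>2"
  have k: "e^4 * B^4 * (1 + d\<^sup>2)^4 \<le> 1 - (1 + d\<^sup>2) * B\<^sup>2" using h by (intro key[of e d a B]) auto
  have "0 \<le> e^4 * B^4 * (1 + d\<^sup>2)^4" by simp
  hence nn: "0 \<le> 1 - (1 + d\<^sup>2) * B\<^sup>2" using k by linarith
  show "let A = sqrt (1 - (1 + d\<^sup>2) * B\<^sup>2);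
         \<Delta>' = e^4 * B^4 * (1 + d\<^sup>2)^4 - 2 * A\<^sup>2
     in - \<Delta>' \<ge> A\<^sup>2" using k nn by (simp add: Let_def)
qed simp

end
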